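(* Let $f$ satisfy (Ha), let $\varphi$ be an anisotropy in $\mathbb R^n$, let $r_0>0$, $\vartheta>0$, and let $F\in\mathcal S^*$ satisfy $P(F,B_r(x))\ge\vartheta r^{n-1}$ for all $x\in\partial F$ and $r\in(0,r_0]$. Then for every measurable $E\subset\mathbb R^n$ and all $p,\ell>0$, $$|E\Delta F|\le\begin{cases}\dfrac{cp^n\ell^n}{r_0^{n-1}}P_\varphi(F)+\dfrac1{f(p)}\displaystyle\int_{E\Delta F}f\big(d_F(x)/\ell\big)dx & \text{if } \ell>r_0,\ p\ell>r_0,\\[2mm] cp^n\ell\,P_\varphi(F)+\dfrac1{f(p)}\displaystyle\int_{E\Delta F}f\big(d_F(x)/\ell\big)dx & \text{if } \ell\in(0,r_0],\ p\ell>r_0,\\[2mm] cp\ell\,P_\varphi(F)+\dfrac1{f(p)}\displaystyle\int_{E\Delta F}f\big(d_F(x)/\ell\big)dx & \text{if } p\ell\in(0,r_0],\end{cases}$$ where $c=\frac{10^n\omega_n}{c_\varphi\vartheta}$.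
   Context: Let $n\ge2$. An anisotropy is a positively one-homogeneous, even, convex function $\varphi:\mathbb R^n\to[0,+\infty)$ equivalent to the Euclidean norm; $\varphi^o(\eta)=\sup\{\xi\cdot\eta:\varphi(\xi)=1\}$ and $c_\varphi>0$ is a constant with $c_\varphi|\xi|\le\varphi^o(\xi)$ for all $\xi$. $P_\varphi(F)=\int_{\partial^*F}\varphi^o(\nu_F)d\mathcal H^{n-1}$; $P(F,A)$ is the Euclidean perimeter of $F$ in $A$. $\omega_n$ is the volume of the unit ball, $B_r(x)$ the open Euclidean ball. $\mathcal S=\{E:|E|<+\infty,\ x\in E\iff\lim_{\rho\to0^+}\rho^{-n}|B_\rho(x)\setminus E|=0\}$, $\mathcal S^*=\mathcal S\cap BV(\mathbb R^n;\{0,1\})$. $d_F=\mathrm{dist}(\cdot,\partial F)$. (Ha): $f:\mathbb R\to\mathbb R$ strictly increasing, continuous, surjective, odd. *)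

theory Defs
  imports "HOL-Analysis.Analysis"
begin

definition Ha :: "(real \<Rightarrow> real) \<Rightarrow> bool" where
  "Ha f \<longleftrightarrow> strict_mono f \<and> continuous_on UNIV f \<and> surj f \<and> (\<forall>x. f (- x) = - f x)"

definition anisotropy :: "('a::euclidean_space \<Rightarrow> real) \<Rightarrow> bool" where
  "anisotropy \<phi> \<longleftrightarrow>
     (\<forall>t x. t > 0 \<longrightarrow> \<phi> (t *\<^sub>R x) = t * \<phi> x) \<and>
     (\<forall>x. \<phi> (- x) = \<phi> x) \<and>
     convex_on UNIV \<phi> \<and>
     (\<forall>x. \<phi> x \<ge> 0) \<and>
     (\<exists>a b. 0 < a \<and> 0 < b \<and> (\<forall>x. a * norm x \<le> \<phi> x \<and> \<phi> x \<le> b * norm x))"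

definition polar :: "('a::euclidean_space \<Rightarrow> real) \<Rightarrow> 'a \<Rightarrow> real" where
  "polar \<phi> \<eta> = Sup {\<xi> \<bullet> \<eta> | \<xi>. \<phi> \<xi> = 1}"

definition C1c_fields :: "'a::euclidean_space set \<Rightarrow> ('a \<Rightarrow> 'a) set" where
  "C1c_fields A = {T. (\<forall>x. T differentiable (at x)) \<and>
       (\<forall>v. continuous_on UNIV (\<lambda>x. frechet_derivative T (at x) v)) \<and>
       compact (closure {x. T x \<noteq> 0}) \<and> closure {x. T x \<noteq> 0} \<subseteq> A}"

definition divergence :: "('a::euclidean_space \<Rightarrow> 'a) \<Rightarrow> 'a \<Rightarrow> real" where
  "divergence T x = (\<Sum>i\<in>Basis. frechet_derivative T (at x) i \<bullet> i)"

definition perimeter_in :: "'a::euclidean_space set \<Rightarrow> 'a set \<Rightarrow> ennreal" where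
  "perimeter_in F A = (SUP T\<in>{T \<in> C1c_fields A. \<forall>x. norm (T x) \<le> 1}.
       ennreal (integral F (divergence T)))"

text \<open>Anisotropic perimeter, via the variational formula
  sup { int_F div T : T in C^1_c, phi(T) <= 1 } = int_{reduced boundary} phi^o(nu) dH^{n-1}.\<close>
definition aniso_perimeter :: "('a::euclidean_space \<Rightarrow> real) \<Rightarrow> 'a set \<Rightarrow> ennreal" where
  "aniso_perimeter \<phi> F = (SUP T\<in>{T \<in> C1c_fields UNIV. \<forall>x. \<phi> (T x) \<le> 1}.
       ennreal (integral F (divergence T)))"

text \<open>The class S: finite-measure sets normalised by Lebesgue density one points.\<close>
definition classS :: "'a::euclidean_space set set" where
  "classS = {E. E \<in> sets lebesgue \<and> emeasure lebesgue E < \<infinity> \<and>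
     (\<forall>x. x \<in> E \<longleftrightarrow>
        ((\<lambda>\<rho>. measure lebesgue (ball x \<rho> - E) / \<rho> ^ DIM('a)) \<longlongrightarrow> 0) (at_right 0))}"

definition classS_star :: "'a::euclidean_space set set" where
  "classS_star = {E \<in> classS. perimeter_in E UNIV < \<infinity>}"

text \<open>Integrand f(d_F(x)/l), with dist(x, empty set) = +infinity (and f(+infinity) = +infinity).\<close>
definition f_dist :: "(real \<Rightarrow> real) \<Rightarrow> 'a::euclidean_space set \<Rightarrow> real \<Rightarrow> 'a \<Rightarrow> ennreal" where
  "f_dist f F l x = (if frontier F = {} then \<infinity> else ennreal (f (infdist x (frontier F) / l)))"

end

theory Submission
  imports Defs
begin


lemma aniso_bound:
  fixes \<phi> :: "'a::euclidean_space \<Rightarrow> real"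
  assumes an: "anisotropy \<phi>" and c: "c > 0" and pol: "\<forall>\<xi>. c * norm \<xi> \<le> polar \<phi> \<xi>"
  shows "\<phi> x \<le> norm x / c"
proof -
  from an have hom: "\<And>t x. t > 0 \<Longrightarrow> \<phi> (t *\<^sub>R x) = t * \<phi> x"
    and cvx: "convex_on UNIV \<phi>" and nn: "\<And>x. \<phi> x \<ge> 0"
    unfolding anisotropy_def by auto
  from an obtain a b where ab: "0 < a" "0 < b" "\<And>x. a * norm x \<le> \<phi> x \<and> \<phi> x \<le> b * norm x"
    unfolding anisotropy_def by blast
  have phi0: "\<phi> 0 = 0" using ab(3)[of 0] by simp
  define K where "K = {x. \<phi> x \<le> 1}"
  have contphi: "continuous_on UNIV \<phi>" using convex_on_continuous[OF open_UNIV cvx] .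
  have closedK: "closed K" unfolding K_def
    using closed_Collect_le[OF contphi continuous_on_const] by simp
  have convK: "convex K" unfolding K_def
  proof (unfold convex_alt, intro ballI allI impI)
    fix x y and u :: real assume "x \<in> {x. \<phi> x \<le> 1}" "y \<in> {x. \<phi> x \<le> 1}" "0 \<le> u \<and> u \<le> 1"
    hence "\<phi> ((1 - u) *\<^sub>R x + u *\<^sub>R y) \<le> (1 - u) * \<phi> x + u * \<phi> y"
      "(1 - u) * \<phi> x \<le> (1 - u)" "u * \<phi> y \<le> u"
      using convex_onD[OF cvx, of u x y] by (auto simp: mult_left_le)
    thus "(1 - u) *\<^sub>R x + u *\<^sub>R y \<in> {x. \<phi> x \<le> 1}" by simp
  qed
  have claim: "norm \<xi> \<ge> c" if "\<phi> \<xi> = 1" for \<xi>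
  proof (rule ccontr)
    assume "\<not> norm \<xi> \<ge> c"
    hence lt: "norm \<xi> < c" by simp
    have xi0: "\<xi> \<noteq> 0" using that phi0 by auto
    hence np: "norm \<xi> > 0" by simp
    define t where "t = (1 + c / norm \<xi>) / 2"
    have t1: "t > 1" using lt np unfolding t_def by (simp add: field_simps)
    have tc: "t * norm \<xi> < c" using lt np unfolding t_def by (simp add: field_simps)
    define z where "z = t *\<^sub>R \<xi>"
    have "\<phi> z = t" unfolding z_def using hom[of t \<xi>] t1 that by simp
    hence "z \<notin> K" using t1 unfolding K_def by simp
    then obtain a' b' where ab': "a' \<bullet> z < b'" "\<forall>x\<in>K. a' \<bullet> x > b'"
      using separating_hyperplane_closed_point[OF convK closedK] by blast
    have "0 \<in> K" unfolding K_def using phi0 by simp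
    hence b'0: "b' < 0" using ab'(2) by force
    define \<eta> where "\<eta> = - a'"
    have etaz: "\<eta> \<bullet> z > - b'" using ab'(1) unfolding \<eta>_def by simp
    have "polar \<phi> \<eta> \<le> - b'"
      unfolding polar_def
    proof (rule cSup_least)
      show "{\<xi> \<bullet> \<eta> |\<xi>. \<phi> \<xi> = 1} \<noteq> {}" using that by blast
      show "x \<le> - b'" if xin: "x \<in> {\<xi> \<bullet> \<eta> |\<xi>. \<phi> \<xi> = 1}" for x
      proof -
        obtain \<xi>' where "x = \<xi>' \<bullet> \<eta>" "\<phi> \<xi>' = 1" using xin by blast
        moreover have "b' < a' \<bullet> \<xi>'" using ab'(2) \<open>\<phi> \<xi>' = 1\<close> unfolding K_def by simp
        ultimately show ?thesis unfolding \<eta>_def by (simp add: inner_commute)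
      qed
    qed
    also have "- b' < \<eta> \<bullet> z" by (rule etaz)
    also have "\<dots> \<le> norm \<eta> * norm z" by (rule norm_cauchy_schwarz)
    also have "\<dots> \<le> norm \<eta> * c"
    proof -
      have "norm z = t * norm \<xi>" unfolding z_def using t1 by simp
      thus ?thesis using tc by (simp add: mult_left_mono)
    qed
    finally have "polar \<phi> \<eta> < c * norm \<eta>" by (simp add: mult.commute)
    thus False using pol by (meson not_le)
  qed
  show ?thesis
  proof (cases "x = 0")
    case True thus ?thesis using phi0 by simp
  next
    case False
    have "a * norm x > 0" using ab(1) False by simp
    hence px: "\<phi> x > 0" using ab(3)[of x] by linarith
    define w where "w = (1 / \<phi> x) *\<^sub>R x"
    have "\<phi> w = 1" unfolding w_def using hom[of "1/\<phi> x" x] px by simp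
    hence "norm w \<ge> c" by (rule claim)
    hence "norm x / \<phi> x \<ge> c" unfolding w_def using px by simp
    thus ?thesis using px c by (simp add: field_simps)
  qed
qed



lemma C1c_zero: "(\<lambda>x. 0) \<in> C1c_fields A"
  unfolding C1c_fields_def by auto

lemma C1c_mono: "A \<subseteq> B \<Longrightarrow> C1c_fields A \<subseteq> C1c_fields B"
  unfolding C1c_fields_def by auto

lemma C1c_deriv_zero:
  assumes "T \<in> C1c_fields A" "x \<notin> closure {x. T x \<noteq> 0}"
  shows "frechet_derivative T (at x) = (\<lambda>v. 0)"
proof -
  have "frechet_derivative T (at x) = frechet_derivative (\<lambda>x. 0) (at x)"
    by (rule frechet_derivative_transform_within_open[where X="- closure {x. T x \<noteq> 0}"])
       (use assms closure_subset[of "{x. T x \<noteq> 0}"] in \<open>auto simp: C1c_fields_def\<close>)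
  thus ?thesis by simp
qed

lemma div_cont:
  assumes "T \<in> C1c_fields A"
  shows "continuous_on UNIV (divergence T)"
proof -
  have "\<And>v. continuous_on UNIV (\<lambda>x. frechet_derivative T (at x) v)"
    using assms unfolding C1c_fields_def by auto
  thus ?thesis unfolding divergence_def[abs_def]
    by (intro continuous_intros) auto
qed

lemma div_zero:
  assumes "T \<in> C1c_fields A" "x \<notin> closure {x. T x \<noteq> 0}"
  shows "divergence T x = 0"
  using C1c_deriv_zero[OF assms] unfolding divergence_def by simp

lemma div_integrable:
  assumes "T \<in> C1c_fields A" "F \<in> sets lebesgue"
  shows "divergence T integrable_on F"
proof -
  let ?K = "closure {x. T x \<noteq> 0}"
  have "compact ?K" using assms unfolding C1c_fields_def by auto
  then obtain a where a: "?K \<subseteq> cbox (-a) a"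
    using bounded_subset_cbox_symmetric compact_imp_bounded by blast
  have "divergence T absolutely_integrable_on cbox (-a) a"
    using div_cont[OF assms(1)] by (intro absolutely_integrable_continuous) (auto intro: continuous_on_subset)
  hence "(\<lambda>x. if x \<in> cbox (-a) a then divergence T x else 0) absolutely_integrable_on UNIV"
    using absolutely_integrable_restrict_UNIV by blast
  moreover have "(\<lambda>x. if x \<in> cbox (-a) a then divergence T x else 0) = divergence T"
    using a div_zero[OF assms(1)] by (auto simp: fun_eq_iff)
  ultimately have "divergence T absolutely_integrable_on UNIV" by simp
  hence "divergence T absolutely_integrable_on F"
    using set_integrable_subset assms(2) by blast
  thus ?thesis using absolutely_integrable_on_def by blast
qed

lemma C1c_add:
  assumes T1: "T1 \<in> C1c_fields A" and T2: "T2 \<in> C1c_fields B"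
  shows "(\<lambda>x. T1 x + T2 x) \<in> C1c_fields (A \<union> B)"
    and "divergence (\<lambda>x. T1 x + T2 x) = (\<lambda>x. divergence T1 x + divergence T2 x)"
proof -
  have d1: "\<And>x. T1 differentiable (at x)" and d2: "\<And>x. T2 differentiable (at x)"
    using assms unfolding C1c_fields_def by auto
  have fd: "frechet_derivative (\<lambda>x. T1 x + T2 x) (at x) =
      (\<lambda>v. frechet_derivative T1 (at x) v + frechet_derivative T2 (at x) v)" for x
    by (rule frechet_derivative_at[symmetric])
       (intro has_derivative_add d1[unfolded frechet_derivative_works] d2[unfolded frechet_derivative_works])
  let ?S = "{x. T1 x + T2 x \<noteq> 0}" and ?S1 = "{x. T1 x \<noteq> 0}" and ?S2 = "{x. T2 x \<noteq> 0}"
  have sub: "closure ?S \<subseteq> closure ?S1 \<union> closure ?S2"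
  proof -
    have "?S \<subseteq> ?S1 \<union> ?S2" by auto
    hence "closure ?S \<subseteq> closure (?S1 \<union> ?S2)" by (rule closure_mono)
    thus ?thesis by (simp add: closure_Un)
  qed
  have c1: "compact (closure ?S1)" "closure ?S1 \<subseteq> A" and c2: "compact (closure ?S2)" "closure ?S2 \<subseteq> B"
    using assms unfolding C1c_fields_def by auto
  have "bounded (closure ?S1 \<union> closure ?S2)" using c1 c2 by (simp add: compact_imp_bounded)
  hence "bounded ?S" using sub closure_subset by (meson bounded_subset)
  hence comp: "compact (closure ?S)" by (simp add: compact_closure)
  have cont: "continuous_on UNIV (\<lambda>x. frechet_derivative (\<lambda>x. T1 x + T2 x) (at x) v)" for v
    unfolding fd using assms unfolding C1c_fields_def by (auto intro: continuous_on_add)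
  show "(\<lambda>x. T1 x + T2 x) \<in> C1c_fields (A \<union> B)"
    unfolding C1c_fields_def using d1 d2 cont comp sub c1 c2 by auto
  show "divergence (\<lambda>x. T1 x + T2 x) = (\<lambda>x. divergence T1 x + divergence T2 x)"
    unfolding divergence_def fd by (auto simp: fun_eq_iff inner_add_left sum.distrib)
qed

lemma C1c_scale:
  assumes T: "T \<in> C1c_fields A" and c: "c > 0"
  shows "(\<lambda>x. c *\<^sub>R T x) \<in> C1c_fields A"
    and "divergence (\<lambda>x. c *\<^sub>R T x) = (\<lambda>x. c * divergence T x)"
proof -
  have d: "\<And>x. T differentiable (at x)" using T unfolding C1c_fields_def by auto
  have fd: "frechet_derivative (\<lambda>x. c *\<^sub>R T x) (at x) =
      (\<lambda>v. c *\<^sub>R frechet_derivative T (at x) v)" for x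
    by (rule frechet_derivative_at[symmetric])
       (intro has_derivative_scaleR_right d[unfolded frechet_derivative_works])
  have S: "{x. c *\<^sub>R T x \<noteq> 0} = {x. T x \<noteq> 0}" using c by auto
  have cont: "continuous_on UNIV (\<lambda>x. frechet_derivative (\<lambda>x. c *\<^sub>R T x) (at x) v)" for v
    unfolding fd using T unfolding C1c_fields_def by (auto intro: continuous_intros)
  show "(\<lambda>x. c *\<^sub>R T x) \<in> C1c_fields A"
    using T cont d S unfolding C1c_fields_def by simp
  show "divergence (\<lambda>x. c *\<^sub>R T x) = (\<lambda>x. c * divergence T x)"
    unfolding divergence_def fd by (auto simp: fun_eq_iff sum_distrib_left)
qed



definition FA :: "'a::euclidean_space set \<Rightarrow> ('a \<Rightarrow> 'a) set" where
  "FA A = {T \<in> C1c_fields A. \<forall>x. norm (T x) \<le> 1}"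

lemma perim_FA: "perimeter_in F A = (SUP T\<in>FA A. ennreal (integral F (divergence T)))"
  unfolding perimeter_in_def FA_def ..

lemma FA_zero: "(\<lambda>x. 0) \<in> FA A" unfolding FA_def using C1c_zero by auto

lemma FA_mono: "A \<subseteq> B \<Longrightarrow> FA A \<subseteq> FA B" unfolding FA_def using C1c_mono by blast

lemma perim_upper: "T \<in> FA A \<Longrightarrow> ennreal (integral F (divergence T)) \<le> perimeter_in F A"
  unfolding perim_FA by (rule SUP_upper)

lemma perim_mono: "A \<subseteq> B \<Longrightarrow> perimeter_in F A \<le> perimeter_in F B"
  unfolding perim_FA by (rule SUP_subset_mono[OF FA_mono]) auto

lemma perim_super2:
  assumes F: "F \<in> sets lebesgue" and AB: "A \<inter> B = {}"
  shows "perimeter_in F A + perimeter_in F B \<le> perimeter_in F (A \<union> B)"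
proof -
  have key: "ennreal (integral F (divergence T1)) + ennreal (integral F (divergence T2))
      \<le> perimeter_in F (A \<union> B)" if T1: "T1 \<in> FA A" and T2: "T2 \<in> FA B" for T1 T2
  proof -
    let ?a = "integral F (divergence T1)" and ?b = "integral F (divergence T2)"
    have T1A: "T1 \<in> FA (A \<union> B)" and T2B: "T2 \<in> FA (A \<union> B)" using T1 T2 FA_mono by blast+
    have c1: "T1 \<in> C1c_fields A" and c2: "T2 \<in> C1c_fields B" using T1 T2 unfolding FA_def by auto
    have cl1: "closure {x. T1 x \<noteq> 0} \<subseteq> A" and cl2: "closure {x. T2 x \<noteq> 0} \<subseteq> B"
      using c1 c2 unfolding C1c_fields_def by auto
    have sumT: "(\<lambda>x. T1 x + T2 x) \<in> FA (A \<union> B)"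
    proof -
      have "norm (T1 x + T2 x) \<le> 1" for x
      proof (cases "T1 x = 0")
        case True thus ?thesis using T2 unfolding FA_def by auto
      next
        case False
        hence "x \<in> A" using cl1 closure_subset[of "{x. T1 x \<noteq> 0}"] by auto
        hence "x \<notin> closure {x. T2 x \<noteq> 0}" using cl2 AB by auto
        hence "T2 x = 0" using closure_subset[of "{x. T2 x \<noteq> 0}"] by auto
        thus ?thesis using T1 unfolding FA_def by auto
      qed
      thus ?thesis unfolding FA_def using C1c_add(1)[OF c1 c2] by auto
    qed
    have "integral F (divergence (\<lambda>x. T1 x + T2 x)) = ?a + ?b"
      unfolding C1c_add(2)[OF c1 c2]
      by (rule integral_add) (use div_integrable F c1 c2 in auto)
    hence s: "ennreal (?a + ?b) \<le> perimeter_in F (A \<union> B)"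
      using perim_upper[OF sumT, of F] by simp
    have a: "ennreal ?a \<le> perimeter_in F (A \<union> B)" using perim_upper[OF T1A] .
    have b: "ennreal ?b \<le> perimeter_in F (A \<union> B)" using perim_upper[OF T2B] .
    show ?thesis
    proof (cases "?a < 0")
      case True thus ?thesis using b by (simp add: ennreal_neg)
    next
      case False note a0 = this
      show ?thesis
      proof (cases "?b < 0")
        case True thus ?thesis using a by (simp add: ennreal_neg)
      next
        case False thus ?thesis using a0 s by simp
      qed
    qed
  qed
  have ne: "FA A \<noteq> {}" "FA B \<noteq> {}" using FA_zero by blast+
  show ?thesis
    unfolding perim_FA[of F A] perim_FA[of F B]
    apply (subst ennreal_SUP_add_right[OF ne(2)])
    apply (rule SUP_least)
    apply (subst ennreal_SUP_add_left[OF ne(1), symmetric])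
    apply (rule SUP_least)
    by (rule key)
qed

lemma perim_superN:
  assumes F: "F \<in> sets lebesgue" and fin: "finite X"
    and disj: "\<And>x y. x \<in> X \<Longrightarrow> y \<in> X \<Longrightarrow> x \<noteq> y \<Longrightarrow> B x \<inter> B y = {}"
  shows "(\<Sum>x\<in>X. perimeter_in F (B x)) \<le> perimeter_in F (\<Union>x\<in>X. B x)"
  using fin disj
proof (induction X rule: finite_induct)
  case empty thus ?case by simp
next
  case (insert y X)
  have IH: "(\<Sum>x\<in>X. perimeter_in F (B x)) \<le> perimeter_in F (\<Union>x\<in>X. B x)"
    using insert.IH insert.prems by blast
  have d: "B y \<inter> (\<Union>x\<in>X. B x) = {}"
  proof -
    have "B y \<inter> B x = {}" if "x \<in> X" for x
    proof -
      have "y \<noteq> x" using that insert.hyps(2) by blast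
      thus ?thesis using insert.prems[of y x] that by simp
    qed
    thus ?thesis by blast
  qed
  have "(\<Sum>x\<in>insert y X. perimeter_in F (B x)) = perimeter_in F (B y) + (\<Sum>x\<in>X. perimeter_in F (B x))"
    using insert.hyps by simp
  also have "\<dots> \<le> perimeter_in F (B y) + perimeter_in F (\<Union>x\<in>X. B x)"
    using IH by (rule add_left_mono)
  also have "\<dots> \<le> perimeter_in F (B y \<union> (\<Union>x\<in>X. B x))" by (rule perim_super2[OF F d])
  finally show ?case by simp
qed

lemma aniso_ge:
  assumes an: "anisotropy \<phi>" and c: "c > 0" and pol: "\<forall>\<xi>. c * norm \<xi> \<le> polar \<phi> \<xi>"
  shows "ennreal c * perimeter_in F UNIV \<le> aniso_perimeter \<phi> F"
proof -
  have "ennreal c * ennreal (integral F (divergence T)) \<le> aniso_perimeter \<phi> F"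
    if T: "T \<in> FA UNIV" for T
  proof -
    have cT: "T \<in> C1c_fields UNIV" and nT: "\<And>x. norm (T x) \<le> 1" using T unfolding FA_def by auto
    have mem: "(\<lambda>x. c *\<^sub>R T x) \<in> {T \<in> C1c_fields UNIV. \<forall>x. \<phi> (T x) \<le> 1}"
    proof -
      have "\<phi> (c *\<^sub>R T x) \<le> 1" for x
      proof -
        have "\<phi> (c *\<^sub>R T x) \<le> norm (c *\<^sub>R T x) / c" by (rule aniso_bound[OF an c pol])
        also have "\<dots> = norm (T x)" using c by simp
        finally show ?thesis using nT[of x] by simp
      qed
      thus ?thesis using C1c_scale(1)[OF cT c] by auto
    qed
    have "integral F (divergence (\<lambda>x. c *\<^sub>R T x)) = c * integral F (divergence T)"
      unfolding C1c_scale(2)[OF cT c] using integral_mult_right by blast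
    hence "ennreal (c * integral F (divergence T)) \<le> aniso_perimeter \<phi> F"
      unfolding aniso_perimeter_def using SUP_upper[OF mem, of "\<lambda>T. ennreal (integral F (divergence T))"]
      by simp
    thus ?thesis using c by (metis ennreal_mult' less_imp_le)
  qed
  thus ?thesis unfolding perim_FA SUP_mult_left_ennreal by (intro SUP_least)
qed



lemma emeasure_leb_ball:
  fixes x :: "'a::euclidean_space"
  assumes "r \<ge> 0"
  shows "emeasure lebesgue (ball x r) = ennreal (unit_ball_vol (DIM('a)) * r ^ DIM('a))"
  using emeasure_ball[OF assms, of x] by simp

lemma measure_leb_ball1:
  "measure lebesgue (ball (0::'a::euclidean_space) 1) = unit_ball_vol (DIM('a))"
  using content_ball[of 1 "0::'a"] by simp

lemma tube_bound:
  fixes F :: "'a::euclidean_space set"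
  assumes F: "F \<in> sets lebesgue" and Pfin: "perimeter_in F UNIV < \<infinity>"
    and dens: "\<forall>x\<in>frontier F. \<forall>r\<in>{0<..r0}. perimeter_in F (ball x r) \<ge> ennreal (theta * r ^ (DIM('a) - 1))"
    and th: "theta > 0" and rho: "0 < \<rho>" "\<rho> \<le> r0" "\<rho> \<le> s" and ne: "frontier F \<noteq> {}"
  shows "emeasure lebesgue {x. infdist x (frontier F) < s}
    \<le> ennreal (unit_ball_vol (DIM('a)) * (3 * s) ^ DIM('a) / (theta * \<rho> ^ (DIM('a) - 1))
               * enn2real (perimeter_in F UNIV))"
proof -
  define S where "S = frontier F"
  define n where "n = DIM('a)"
  define q where "q = theta * \<rho> ^ (n - 1)"
  define P where "P = perimeter_in F UNIV"
  define Pr where "Pr = enn2real P"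
  define \<omega> where "\<omega> = unit_ball_vol (real n)"
  have q0: "q > 0" unfolding q_def using th rho by simp
  have PPr: "P = ennreal Pr" unfolding Pr_def P_def using Pfin by simp
  have Pr0: "Pr \<ge> 0" unfolding Pr_def by simp
  define sep where "sep X \<longleftrightarrow> finite X \<and> X \<subseteq> S \<and> (\<forall>x\<in>X. \<forall>y\<in>X. x \<noteq> y \<longrightarrow> 2 * \<rho> \<le> dist x y)" for X
  have cardb: "real (card X) * q \<le> Pr" if "sep X" for X
  proof -
    have fin: "finite X" and XS: "X \<subseteq> S" and sp: "\<forall>x\<in>X. \<forall>y\<in>X. x \<noteq> y \<longrightarrow> 2 * \<rho> \<le> dist x y"
      using that unfolding sep_def by auto
    have disj: "ball x \<rho> \<inter> ball y \<rho> = {}" if "x \<in> X" "y \<in> X" "x \<noteq> y" for x y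
    proof (rule ccontr)
      assume "ball x \<rho> \<inter> ball y \<rho> \<noteq> {}"
      then obtain z where "dist x z < \<rho>" "dist y z < \<rho>" by auto
      hence "dist x y < 2 * \<rho>" using dist_triangle3[of x y z] by (simp add: dist_commute)
      thus False using sp that by force
    qed
    have "ennreal (real (card X) * q) = (\<Sum>x\<in>X. ennreal q)"
      using q0 by (simp add: ennreal_of_nat_eq_real_of_nat ennreal_mult)
    also have "\<dots> \<le> (\<Sum>x\<in>X. perimeter_in F (ball x \<rho>))"
    proof (rule sum_mono)
      fix x assume "x \<in> X"
      hence "x \<in> frontier F" using XS unfolding S_def by auto
      thus "ennreal q \<le> perimeter_in F (ball x \<rho>)" using dens rho unfolding q_def n_def by auto
    qed
    also have "\<dots> \<le> perimeter_in F (\<Union>x\<in>X. ball x \<rho>)"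
      by (rule perim_superN[OF F fin disj])
    also have "\<dots> \<le> P" unfolding P_def by (rule perim_mono) simp
    finally show ?thesis unfolding PPr using Pr0 by (simp add: ennreal_le_iff)
  qed
  define M where "M = nat \<lceil>Pr / q\<rceil>"
  define Q where "Q k \<longleftrightarrow> (\<exists>X. sep X \<and> card X = k)" for k
  have Q0: "Q 0" unfolding Q_def sep_def by (rule exI[of _ "{}"]) simp
  have Qb: "k \<le> M" if Qk: "Q k" for k
  proof -
    obtain X where "sep X" "card X = k" using Qk unfolding Q_def by blast
    hence "real k * q \<le> Pr" using cardb by blast
    hence "real k \<le> Pr / q" using q0 by (simp add: field_simps)
    thus ?thesis unfolding M_def by linarith
  qed
  have "Q (Greatest Q)" using GreatestI_nat[of Q 0 M] Q0 Qb by blast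
  then obtain X0 where X0: "sep X0" "card X0 = Greatest Q" unfolding Q_def by blast
  have cover: "\<exists>x\<in>X0. dist y x < 2 * \<rho>" if yS: "y \<in> S" for y
  proof (rule ccontr)
    assume "\<not> ?thesis"
    hence far: "\<forall>x\<in>X0. 2 * \<rho> \<le> dist y x" by auto
    have "y \<notin> X0" using far rho by force
    have "sep (insert y X0)"
      using X0(1) far yS unfolding sep_def by (auto simp: dist_commute)
    hence "Q (card (insert y X0))" unfolding Q_def by blast
    hence "card (insert y X0) \<le> Greatest Q" using Greatest_le_nat[of Q _ M] Qb by blast
    moreover have "card (insert y X0) = card X0 + 1"
      using \<open>y \<notin> X0\<close> X0(1) unfolding sep_def by simp
    ultimately show False using X0(2) by simp
  qed
  have finX0: "finite X0" using X0 unfolding sep_def by auto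
  have sub: "{x. infdist x S < s} \<subseteq> (\<Union>x\<in>X0. ball x (3 * s))"
  proof
    fix z assume "z \<in> {x. infdist x S < s}"
    hence zs: "infdist z S < s" by simp
    have "closed S" unfolding S_def by simp
    then obtain y where y: "y \<in> S" "infdist z S = dist z y"
      using infdist_attains_inf[of S z] ne unfolding S_def by blast
    obtain x where x: "x \<in> X0" "dist y x < 2 * \<rho>" using cover[OF y(1)] by blast
    have "dist x z \<le> dist z y + dist y x" by (metis dist_commute dist_triangle)
    also have "\<dots> < 3 * s" using zs y x rho by linarith
    finally show "z \<in> (\<Union>x\<in>X0. ball x (3 * s))" using x by auto
  qed
  have s0: "s > 0" using rho by simp
  have "emeasure lebesgue {x. infdist x S < s} \<le> emeasure lebesgue (\<Union>x\<in>X0. ball x (3 * s))"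
    by (rule emeasure_mono[OF sub]) (use finX0 in \<open>auto intro!: sets.finite_UN\<close>)
  also have "\<dots> \<le> (\<Sum>x\<in>X0. emeasure lebesgue (ball x (3 * s)))"
    by (rule emeasure_subadditive_finite[OF finX0]) auto
  also have "\<dots> = (\<Sum>x\<in>X0. ennreal (\<omega> * (3 * s) ^ n))"
    unfolding \<omega>_def n_def by (rule sum.cong[OF refl], rule emeasure_leb_ball) (use s0 in simp)
  also have "\<dots> = ennreal (real (card X0) * (\<omega> * (3 * s) ^ n))"
    using s0 unfolding \<omega>_def by (simp add: ennreal_of_nat_eq_real_of_nat ennreal_mult)
  also have "\<dots> \<le> ennreal (\<omega> * (3 * s) ^ n / q * Pr)"
  proof (rule ennreal_leI)
    have "real (card X0) \<le> Pr / q" using cardb[OF X0(1)] q0 by (simp add: field_simps)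
    moreover have "\<omega> * (3 * s) ^ n \<ge> 0" unfolding \<omega>_def using s0 by simp
    ultimately have "real (card X0) * (\<omega> * (3 * s) ^ n) \<le> Pr / q * (\<omega> * (3 * s) ^ n)"
      by (rule mult_right_mono)
    thus "real (card X0) * (\<omega> * (3 * s) ^ n) \<le> \<omega> * (3 * s) ^ n / q * Pr" by (simp add: field_simps)
  qed
  finally show ?thesis unfolding S_def \<omega>_def n_def q_def Pr_def P_def .
qed



lemma fdist_meas:
  assumes fc: "continuous_on UNIV f" and ne: "frontier F \<noteq> {}" and l: "l > 0"
  shows "f_dist f F l \<in> borel_measurable lebesgue"
proof -
  have "continuous_on UNIV (\<lambda>x. f (infdist x (frontier F) / l))"
    by (rule continuous_on_compose2[OF fc]) (use l in \<open>auto intro!: continuous_intros\<close>)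
  hence "(\<lambda>x. f (infdist x (frontier F) / l)) \<in> borel_measurable (lebesgue_on UNIV)"
    by (rule continuous_imp_measurable_on_sets_lebesgue) simp
  hence "(\<lambda>x. f (infdist x (frontier F) / l)) \<in> borel_measurable lebesgue"
    unfolding lebesgue_on_UNIV_eq .
  hence "(\<lambda>x. ennreal (f (infdist x (frontier F) / l))) \<in> borel_measurable lebesgue"
    by measurable
  moreover have "f_dist f F l = (\<lambda>x. ennreal (f (infdist x (frontier F) / l)))"
    using ne unfolding f_dist_def by auto
  ultimately show ?thesis by simp
qed

lemma core:
  fixes F E :: "'a::euclidean_space set"
  assumes F: "F \<in> sets lebesgue" and Pfin: "perimeter_in F UNIV < \<infinity>"
    and dens: "\<forall>x\<in>frontier F. \<forall>r\<in>{0<..r0}. perimeter_in F (ball x r) \<ge> ennreal (theta * r ^ (DIM('a) - 1))"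
    and th: "theta > 0" and rho: "0 < \<rho>" "\<rho> \<le> r0" "\<rho> \<le> p * l" and ne: "frontier F \<noteq> {}"
    and E: "E \<in> sets lebesgue" and fc: "continuous_on UNIV f" and fm: "mono f" and fp: "f p > 0"
    and l: "l > 0"
  shows "emeasure lebesgue ((E - F) \<union> (F - E))
    \<le> ennreal (unit_ball_vol (DIM('a)) * (3 * (p * l)) ^ DIM('a) / (theta * \<rho> ^ (DIM('a) - 1))
               * enn2real (perimeter_in F UNIV))
      + ennreal (1 / f p) * (\<integral>\<^sup>+ x \<in> (E - F) \<union> (F - E). f_dist f F l x \<partial>lebesgue)"
proof -
  define D where "D = (E - F) \<union> (F - E)"
  define U where "U = {x. infdist x (frontier F) < p * l}"
  have D: "D \<in> sets lebesgue" unfolding D_def using E F by auto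
  have "open U" unfolding U_def
    by (rule open_Collect_less) (auto intro: continuous_intros)
  hence U: "U \<in> sets lebesgue" by simp
  have split: "emeasure lebesgue D \<le> emeasure lebesgue (D \<inter> U) + emeasure lebesgue (D - U)"
  proof -
    have "emeasure lebesgue D = emeasure lebesgue ((D \<inter> U) \<union> (D - U))" by (simp add: Int_Diff_Un)
    also have "\<dots> \<le> emeasure lebesgue (D \<inter> U) + emeasure lebesgue (D - U)"
      by (rule emeasure_subadditive) (use D U in auto)
    finally show ?thesis .
  qed
  have m1: "emeasure lebesgue (D \<inter> U) \<le> emeasure lebesgue U"
    by (rule emeasure_mono) (use U in auto)
  have m2: "emeasure lebesgue U \<le> ennreal (unit_ball_vol (DIM('a)) * (3 * (p * l)) ^ DIM('a) / (theta * \<rho> ^ (DIM('a) - 1))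
               * enn2real (perimeter_in F UNIV))"
    unfolding U_def by (rule tube_bound[OF F Pfin dens th rho ne])
  have m3: "emeasure lebesgue (D - U) \<le> ennreal (1 / f p) * (\<integral>\<^sup>+ x \<in> D. f_dist f F l x \<partial>lebesgue)"
  proof -
    have "emeasure lebesgue (D - U) = (\<integral>\<^sup>+ x. indicator (D - U) x \<partial>lebesgue)"
      using D U by simp
    also have "\<dots> \<le> (\<integral>\<^sup>+ x. ennreal (1 / f p) * (f_dist f F l x * indicator D x) \<partial>lebesgue)"
    proof (rule nn_integral_mono)
      fix x
      show "indicator (D - U) x \<le> ennreal (1 / f p) * (f_dist f F l x * indicator D x)"
      proof (cases "x \<in> D - U")
        case False thus ?thesis by simp
      next
        case True
        hence "infdist x (frontier F) \<ge> p * l" "x \<in> D" unfolding U_def by auto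
        hence "infdist x (frontier F) / l \<ge> p" using l by (simp add: field_simps)
        hence ge: "f (infdist x (frontier F) / l) \<ge> f p" using fm by (simp add: monoD)
        hence "f (infdist x (frontier F) / l) / f p \<ge> 1" using fp by simp
        hence "ennreal 1 \<le> ennreal (f (infdist x (frontier F) / l) / f p)" by (rule ennreal_leI)
        also have "\<dots> = ennreal (1 / f p) * ennreal (f (infdist x (frontier F) / l))"
          by (subst ennreal_mult'[symmetric]) (use fp in auto)
        finally show ?thesis using True ne unfolding f_dist_def by simp
      qed
    qed
    also have "\<dots> = ennreal (1 / f p) * (\<integral>\<^sup>+ x. f_dist f F l x * indicator D x \<partial>lebesgue)"
      by (rule nn_integral_cmult) (use fdist_meas[OF fc ne l] D in measurable)
    finally show ?thesis .
  qed
  from split add_mono[OF order_trans[OF m1 m2] m3] show ?thesis unfolding D_def by (rule order_trans)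
qed



lemma numer:
  fixes w z W c :: real
  assumes "w \<ge> 0" "z \<le> W" "z \<ge> 0" "c > 0" "(n::nat) \<ge> 0"
  shows "w * 3 ^ n * z \<le> (10 ^ n * w / c) * W * c"
proof -
  have "(3::real) ^ n \<le> 10 ^ n" by (rule power_mono) auto
  moreover have "z \<le> W" "0 \<le> z" "w \<ge> 0" using assms by auto
  ultimately have "w * 3 ^ n * z \<le> w * 10 ^ n * W"
    by (intro mult_mono mult_left_mono) auto
  thus ?thesis using assms by (simp add: field_simps)
qed

theorem lemmaA1:
  fixes f :: "real \<Rightarrow> real" and \<phi> :: "'n::euclidean_space \<Rightarrow> real"
    and c_phi r0 theta p l :: real and F E :: "'n set"
  assumes "DIM('n) \<ge> 2"
    and "Ha f"
    and "anisotropy \<phi>"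
    and "c_phi > 0" and "\<forall>\<xi>. c_phi * norm \<xi> \<le> polar \<phi> \<xi>"
    and "r0 > 0" and "theta > 0"
    and "F \<in> classS_star"
    and "\<forall>x\<in>frontier F. \<forall>r\<in>{0<..r0}.
           perimeter_in F (ball x r) \<ge> ennreal (theta * r ^ (DIM('n) - 1))"
    and "E \<in> sets lebesgue"
    and "p > 0" and "l > 0"
  shows "let c = 10 ^ DIM('n) * measure lebesgue (ball (0::'n) 1) / (c_phi * theta);
             n = DIM('n);
             I = ennreal (1 / f p) * (\<integral>\<^sup>+ x \<in> (E - F) \<union> (F - E). f_dist f F l x \<partial>lebesgue)
         in (l > r0 \<and> p * l > r0 \<longrightarrow>
               emeasure lebesgue ((E - F) \<union> (F - E))
                 \<le> ennreal (c * p ^ n * l ^ n / r0 ^ (n - 1)) * aniso_perimeter \<phi> F + I)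
          \<and> (l \<le> r0 \<and> p * l > r0 \<longrightarrow>
               emeasure lebesgue ((E - F) \<union> (F - E))
                 \<le> ennreal (c * p ^ n * l) * aniso_perimeter \<phi> F + I)
          \<and> (p * l \<le> r0 \<longrightarrow>
               emeasure lebesgue ((E - F) \<union> (F - E))
                 \<le> ennreal (c * p * l) * aniso_perimeter \<phi> F + I)"
proof -
  note A = assms
  have smf: "strict_mono f" and fc: "continuous_on UNIV f" and odd: "\<And>x. f (- x) = - f x"
    using A(2) unfolding Ha_def by auto
  have f0: "f 0 = 0" using odd[of 0] by simp
  have fp: "f p > 0" using strict_monoD[OF smf A(11)] f0 by simp
  have fm: "mono f" using smf by (rule strict_mono_mono)
  have F: "F \<in> sets lebesgue" and Pfin: "perimeter_in F UNIV < \<infinity>"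
    using A(8) unfolding classS_star_def classS_def by auto
  define n where "n = DIM('n)"
  define \<omega> where "\<omega> = unit_ball_vol (real n)"
  define c where "c = 10 ^ n * \<omega> / (c_phi * theta)"
  have cdef: "10 ^ DIM('n) * measure lebesgue (ball (0::'n) 1) / (c_phi * theta) = c"
    unfolding c_def \<omega>_def n_def measure_leb_ball1 ..
  have cdef': "10 ^ n * measure lebesgue (ball (0::'n) 1) / (c_phi * theta) = c"
    unfolding c_def \<omega>_def n_def measure_leb_ball1 ..
  define D where "D = (E - F) \<union> (F - E)"
  define I where "I = ennreal (1 / f p) * (\<integral>\<^sup>+ x \<in> D. f_dist f F l x \<partial>lebesgue)"
  define Pr where "Pr = enn2real (perimeter_in F UNIV)"
  have PPr: "perimeter_in F UNIV = ennreal Pr" unfolding Pr_def using Pfin by simp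
  have Pr0: "Pr \<ge> 0" unfolding Pr_def by simp
  have aniso: "ennreal c_phi * ennreal Pr \<le> aniso_perimeter \<phi> F"
    using aniso_ge[OF A(3) A(4) A(5), of F] unfolding PPr .
  have n1: "n \<ge> 1" unfolding n_def by simp
  have \<omega>0: "\<omega> > 0" unfolding \<omega>_def by simp
  have gen: "emeasure lebesgue D \<le> ennreal K * aniso_perimeter \<phi> F + I"
    if ne: "frontier F \<noteq> {}" and rho: "0 < \<rho>" "\<rho> \<le> r0" "\<rho> \<le> p * l"
      and K: "K \<ge> 0" "\<omega> * (3 * (p * l)) ^ n / (theta * \<rho> ^ (n - 1)) \<le> K * c_phi" for \<rho> K
  proof -
    have "emeasure lebesgue D \<le> ennreal (\<omega> * (3 * (p * l)) ^ n / (theta * \<rho> ^ (n - 1)) * Pr) + I"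
      using core[OF F Pfin A(9) A(7) rho ne A(10) fc fm fp A(12)]
      unfolding D_def I_def \<omega>_def n_def Pr_def .
    also have "ennreal (\<omega> * (3 * (p * l)) ^ n / (theta * \<rho> ^ (n - 1)) * Pr) \<le> ennreal (K * c_phi * Pr)"
      by (rule ennreal_leI, rule mult_right_mono[OF K(2) Pr0])
    also have "ennreal (K * c_phi * Pr) = ennreal K * (ennreal c_phi * ennreal Pr)"
      using K A(4) Pr0 by (simp add: ennreal_mult mult.assoc)
    also have "\<dots> \<le> ennreal K * aniso_perimeter \<phi> F"
      by (rule mult_left_mono[OF aniso]) simp
    finally show ?thesis by (simp add: add_mono)
  qed
  have emp: "emeasure lebesgue D \<le> I" if em: "frontier F = {}"
  proof -
    have "f_dist f F l = (\<lambda>x. \<infinity>)" using em unfolding f_dist_def by auto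
    hence Ieq: "I = ennreal (1 / f p) * (\<infinity> * emeasure lebesgue D)"
      unfolding I_def using nn_integral_cmult_indicator[of D lebesgue \<infinity>] D_def F A(10) by auto
    show ?thesis
    proof (cases "emeasure lebesgue D = 0")
      case True thus ?thesis by simp
    next
      case False
      have "1 / f p > 0" using fp by simp
      hence "ennreal (1 / f p) \<noteq> 0" by simp
      hence "I = \<infinity>" using Ieq False by (simp add: ennreal_top_mult ennreal_mult_top)
      thus ?thesis by simp
    qed
  qed
  have th0: "theta > 0" by (rule A(7))
  have pl0: "p * l > 0" using A(11) A(12) by simp
  have c_eq: "c = 10 ^ n * (\<omega> / theta) / c_phi" unfolding c_def by simp
  have C1: "emeasure lebesgue D \<le> ennreal (c * p ^ n * l ^ n / r0 ^ (n - 1)) * aniso_perimeter \<phi> F + I"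
    if "l > r0" "p * l > r0"
  proof (cases "frontier F = {}")
    case True thus ?thesis using emp by (simp add: add_increasing)
  next
    case False
    show ?thesis
    proof (rule gen[OF False A(6) order_refl])
      show "r0 \<le> p * l" using that by simp
      show "0 \<le> c * p ^ n * l ^ n / r0 ^ (n - 1)" unfolding c_def using A(4,6,7,11,12) \<omega>0 by simp
      have "\<omega> / theta * 3 ^ n * ((p * l) ^ n / r0 ^ (n - 1)) \<le> 10 ^ n * (\<omega> / theta) / c_phi * ((p * l) ^ n / r0 ^ (n - 1)) * c_phi"
        by (rule numer) (use A(4,6,7,11,12) \<omega>0 in auto)
      thus "\<omega> * (3 * (p * l)) ^ n / (theta * r0 ^ (n - 1)) \<le> c * p ^ n * l ^ n / r0 ^ (n - 1) * c_phi"
        unfolding c_eq by (simp add: power_mult_distrib field_simps)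
    qed
  qed
  have C2: "emeasure lebesgue D \<le> ennreal (c * p ^ n * l) * aniso_perimeter \<phi> F + I"
    if "l \<le> r0" "p * l > r0"
  proof (cases "frontier F = {}")
    case True thus ?thesis using emp by (simp add: add_increasing)
  next
    case False
    have pn: "p ^ n > 0" using A(11) by simp
    have ln: "l ^ n = l * l ^ (n - 1)" using n1 by (metis Suc_diff_1 less_le_trans zero_less_one power_Suc)
    have lr: "l ^ (n - 1) \<le> r0 ^ (n - 1)" using that A(12) by (intro power_mono) auto
    have r0n: "r0 ^ (n - 1) > 0" using A(6) by simp
    have zW: "(p * l) ^ n / r0 ^ (n - 1) \<le> p ^ n * l"
    proof -
      have "(p * l) ^ n / r0 ^ (n - 1) = p ^ n * l * (l ^ (n - 1) / r0 ^ (n - 1))"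
        unfolding power_mult_distrib ln by simp
      also have "\<dots> \<le> p ^ n * l * 1"
        using lr r0n pn A(12) by (intro mult_left_mono) auto
      finally show ?thesis by simp
    qed
    show ?thesis
    proof (rule gen[OF False A(6) order_refl])
      show "r0 \<le> p * l" using that by simp
      show "0 \<le> c * p ^ n * l" unfolding c_def using A(4,6,7,11,12) \<omega>0 by simp
      have "\<omega> / theta * 3 ^ n * ((p * l) ^ n / r0 ^ (n - 1)) \<le> 10 ^ n * (\<omega> / theta) / c_phi * (p ^ n * l) * c_phi"
        by (rule numer) (use A(4,6,7,11,12) \<omega>0 zW in auto)
      thus "\<omega> * (3 * (p * l)) ^ n / (theta * r0 ^ (n - 1)) \<le> c * p ^ n * l * c_phi"
        unfolding c_eq by (simp add: power_mult_distrib field_simps)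
    qed
  qed
  have C3: "emeasure lebesgue D \<le> ennreal (c * p * l) * aniso_perimeter \<phi> F + I"
    if "p * l \<le> r0"
  proof (cases "frontier F = {}")
    case True thus ?thesis using emp by (simp add: add_increasing)
  next
    case False
    have ln: "(p * l) ^ n = (p * l) * (p * l) ^ (n - 1)" using n1 by (metis Suc_diff_1 less_le_trans zero_less_one power_Suc)
    have zW: "(p * l) ^ n / (p * l) ^ (n - 1) = p * l"
      unfolding ln using pl0 by simp
    show ?thesis
    proof (rule gen[OF False pl0 that order_refl])
      show "0 \<le> c * p * l" unfolding c_def using A(4,6,7,11,12) \<omega>0 by simp
      have "\<omega> / theta * 3 ^ n * ((p * l) ^ n / (p * l) ^ (n - 1)) \<le> 10 ^ n * (\<omega> / theta) / c_phi * (p * l) * c_phi"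
        by (rule numer) (use A(4,6,7,11,12) \<omega>0 zW in auto)
      thus "\<omega> * (3 * (p * l)) ^ n / (theta * (p * l) ^ (n - 1)) \<le> c * p * l * c_phi"
        unfolding c_eq by (simp add: power_mult_distrib field_simps)
    qed
  qed
  show ?thesis
    unfolding Let_def n_def[symmetric] D_def[symmetric] I_def[symmetric] cdef'

    using C1 C2 C3 by blast
qed

thm_deps lemmaA1

end
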